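(* Let $Y=\min\{a_2 g_{sr},g_{rd}\}$ and $\bar C_{s_2,\mathrm{SC}}:=\tfrac12\mathbb E[\log_2(1+\rho Y)]$. Then \begin{align*} \bar C_{s_2,\mathrm{SC}}=\frac{1}{2\ln 2}&\sum_{\substack{k_0+\cdots+k_{m_{sr}}=N_r\\ k_0\neq N_r}}\ \sum_{\substack{q_0+\cdots+q_{m_{rd}}=N_d\\ q_0\neq N_d}}\binom{N_r}{k_0,\ldots,k_{m_{sr}}}\binom{N_d}{q_0,\ldots,q_{m_{rd}}}(-1)^{N_r+N_d-k_0-q_0}\\ &\times\Big[\prod_{\mu=0}^{m_{sr}-1}\Big(\tfrac{1}{\mu!}\Big)^{k_{\mu+1}}\Big]\Big(\tfrac{m_{sr}}{a_2\Omega_{sr}}\Big)^{\tau}\Big[\prod_{\varepsilon=0}^{m_{rd}-1}\Big(\tfrac{1}{\varepsilon!}\Big)^{q_{\varepsilon+1}}\Big]\Big(\tfrac{m_{rd}}{\Omega_{rd}}\Big)^{\upsilon}\frac{\Gamma(\tau+\upsilon+1)}{\rho^{\tau+\upsilon}}\,e^{\alpha_{k_0,q_0}/\rho}\,\Gamma\Big[-\tau-\upsilon,\tfrac{\alpha_{k_0,q_0}}{\rho}\Big], \end{align*} where $\tau=\sum_{\mu=0}^{m_{sr}-1}\mu k_{\mu+1}$, $\upsilon=\sum_{\varepsilon=0}^{m_{rd}-1}\varepsilon q_{\varepsilon+1}$ and $\alpha_{k_0,q_0}=\frac{(N_r-k_0)m_{sr}}{a_2\Omega_{sr}}+\frac{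(N_d-q_0)m_{rd}}{\Omega_{rd}}$.
   Context: Let $N_r,N_d$ be positive integers, $m_{sr},m_{sd},m_{rd}$ positive integers, and $\Omega_{sr},\Omega_{sd},\Omega_{rd}>0$. Let $\{G_{sr,i}\}_{i=1}^{N_r}$, $\{G_{sd,j}\}_{j=1}^{N_d}$, $\{G_{rd,k}\}_{k=1}^{N_d}$ be mutually independent random variables, where each $G_{sr,i}$ has the Gamma density $f(x)=\frac{(m_{sr}/\Omega_{sr})^{m_{sr}}x^{m_{sr}-1}}{\Gamma(m_{sr})}e^{-m_{sr}x/\Omega_{sr}}$, $x>0$, and analogously $G_{sd,j}$ with parameters $(m_{sd},\Omega_{sd})$ and $G_{rd,k}$ with $(m_{rd},\Omega_{rd})$. Selection combining (SC) gains: $g_{sr}=\max_i G_{sr,i}$, $g_{sd}=\max_j G_{sd,j}$, $g_{rd}=\max_k G_{rd,k}$. Let $\rho>0$ and $a_1,a_2\in(0,1)$ with $a_1+a_2=1$, $a_1>a_2$. Sums $\sum_{k_0+\cdots+k_{m}=N,\,k_0\neq N}$ run over tuples of nonnegative integers summing to $N$ with $k_0\ne N$; $\binom{N}{k_0,\ldots,k_m}$ is the multinomial coefficient. $\Gamma[s,z]=\int_z^\infty t^{s-1}e^{-t}\,dt$ ($z>0$) is the upper incomplete Gamma function. *)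

theory Defs
  imports "HOL-Probability.Probability"
begin

definition gamma_pdf :: "nat \<Rightarrow> real \<Rightarrow> real \<Rightarrow> real" where
  "gamma_pdf m \<Omega> x =
     (if x > 0 then (real m / \<Omega>) ^ m * x ^ (m - 1) / Gamma (real m) * exp (- real m * x / \<Omega>)
      else 0)"

definition upper_Gamma :: "real \<Rightarrow> real \<Rightarrow> real" where
  "upper_Gamma s z = (\<integral>t\<in>{z<..}. t powr (s - 1) * exp (- t) \<partial>lborel)"

definition comp_tuples :: "nat \<Rightarrow> nat \<Rightarrow> (nat \<Rightarrow> nat) set" where
  "comp_tuples N m = {k. (\<forall>i>m. k i = 0) \<and> (\<Sum>i\<le>m. k i) = N \<and> k 0 \<noteq> N}"

definition multinom :: "nat \<Rightarrow> nat \<Rightarrow> (nat \<Rightarrow> nat) \<Rightarrow> real" where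
  "multinom N m k = fact N / (\<Prod>i\<le>m. fact (k i))"

text \<open>Index of the links' branches: S-R branch i, S-D branch j, R-D branch k.\<close>
datatype branch = SR nat | SD nat | RD nat

end

theory Submission
  imports Defs
begin

lemma erl_int:
  fixes \<alpha> :: real assumes a: "\<alpha> > 0"
  shows "integrable lborel (\<lambda>y. indicator {0<..} y * (y ^ n * exp (- \<alpha> * y)))"
    and "(\<integral>y. indicator {0<..} y * (y ^ n * exp (- \<alpha> * y)) \<partial>lborel) = fact n / \<alpha> ^ (n + 1)"
proof -
  have nn: "(\<integral>\<^sup>+ x. ennreal (erlang_density n \<alpha> x) \<partial>lborel) = 1"
    using nn_integral_erlang_ith_moment[OF a, of n 0] by simp
  have ii: "integrable lborel (erlang_density n \<alpha>)"
    by (rule integrableI_nonneg) (use nn a in auto)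
  have int1: "integral\<^sup>L lborel (erlang_density n \<alpha>) = 1"
    using integral_eq_nn_integral[of "erlang_density n \<alpha>" lborel] nn a by simp
  have ae: "AE y in lborel. indicator {0<..} y * (y ^ n * exp (- \<alpha> * y)) = fact n / \<alpha> ^ (n + 1) * erlang_density n \<alpha> y"
    using AE_lborel_singleton[of 0]
    by eventually_elim (use a in \<open>auto simp: erlang_density_def indicator_def\<close>)
  show "integrable lborel (\<lambda>y. indicator {0<..} y * (y ^ n * exp (- \<alpha> * y)))"
    by (subst integrable_cong_AE[OF _ _ ae]) (use ii in auto)
  show "(\<integral>y. indicator {0<..} y * (y ^ n * exp (- \<alpha> * y)) \<partial>lborel) = fact n / \<alpha> ^ (n + 1)"
    by (subst integral_cong_AE[OF _ _ ae]) (use int1 in auto)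
qed


definition Dint :: "real \<Rightarrow> real \<Rightarrow> nat \<Rightarrow> real" where
  "Dint \<rho> \<alpha> n = (\<integral>y. indicator {0<..} y * (exp (- \<alpha> * y) / (1 + \<rho> * y) ^ (n + 1)) \<partial>lborel)"

definition Aint :: "real \<Rightarrow> real \<Rightarrow> nat \<Rightarrow> real" where
  "Aint \<rho> \<alpha> n = (\<integral>y. indicator {0<..} y * (\<rho> / (1 + \<rho> * y) * (y ^ n * exp (- \<alpha> * y))) \<partial>lborel)"

lemma D_integrable:
  fixes \<rho> \<alpha> :: real
  assumes "\<rho> > 0" "\<alpha> > 0"
  shows "integrable lborel (\<lambda>y. indicator {0<..} y * (exp (- \<alpha> * y) / (1 + \<rho> * y) ^ (n + 1)))"
proof (rule Bochner_Integration.integrable_bound[OF erl_int(1)[OF assms(2), of 0]])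
  show "AE x in lborel. norm (indicator {0<..} x * (exp (- \<alpha> * x) / (1 + \<rho> * x) ^ (n + 1)))
        \<le> norm (indicator {0<..} x * (x ^ 0 * exp (- \<alpha> * x)))"
  proof (rule AE_I2)
    fix x :: real
    show "norm (indicator {0<..} x * (exp (- \<alpha> * x) / (1 + \<rho> * x) ^ (n + 1)))
        \<le> norm (indicator {0<..} x * (x ^ 0 * exp (- \<alpha> * x)))"
    proof (cases "x > 0")
      case True
      have "1 \<le> (1 + \<rho> * x) ^ (n + 1)" using True assms by (intro one_le_power) auto
      then have "exp (- \<alpha> * x) / (1 + \<rho> * x) ^ (n + 1) \<le> exp (- \<alpha> * x)"
        by (simp add: divide_le_eq)
      moreover have "0 \<le> exp (- \<alpha> * x) / (1 + \<rho> * x) ^ (n + 1)" using True assms by simp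
      ultimately show ?thesis using True by (simp del: power_Suc)
    qed simp
  qed
qed measurable

lemma A_integrable:
  fixes \<rho> \<alpha> :: real
  assumes "\<rho> > 0" "\<alpha> > 0"
  shows "integrable lborel (\<lambda>y. indicator {0<..} y * (\<rho> / (1 + \<rho> * y) * (y ^ n * exp (- \<alpha> * y))))"
proof (rule Bochner_Integration.integrable_bound[OF integrable_mult_right[OF erl_int(1)[OF assms(2), of n], of \<rho>]])
  show "AE x in lborel. norm (indicator {0<..} x * (\<rho> / (1 + \<rho> * x) * (x ^ n * exp (- \<alpha> * x))))
        \<le> norm (\<rho> * (indicator {0<..} x * (x ^ n * exp (- \<alpha> * x))))"
  proof (rule AE_I2)
    fix x :: real
    show "norm (indicator {0<..} x * (\<rho> / (1 + \<rho> * x) * (x ^ n * exp (- \<alpha> * x))))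
        \<le> norm (\<rho> * (indicator {0<..} x * (x ^ n * exp (- \<alpha> * x))))"
    proof (cases "x > 0")
      case True
      have "\<rho> / (1 + \<rho> * x) \<le> \<rho>" using True assms by (simp add: divide_le_eq)
      then have "\<rho> / (1 + \<rho> * x) * (x ^ n * exp (- \<alpha> * x)) \<le> \<rho> * (x ^ n * exp (- \<alpha> * x))"
        using True by (intro mult_right_mono) auto
      moreover have "0 \<le> \<rho> / (1 + \<rho> * x) * (x ^ n * exp (- \<alpha> * x))" using True assms by simp
      ultimately show ?thesis using True assms by simp
    qed simp
  qed
qed measurable

lemma aux_alg:
  fixes u P a E c r :: real
  assumes "u > 0" "P > 0"
  shows "- ((- a * E * (u * P) - E * (c * P * r)) / ((u * P) * (u * P))) = a * (E / (u * P)) + c * r * (E / (u * (u * P)))"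
  using assms by (simp add: field_simps)

lemma D_rec:
  assumes r: "\<rho> > 0" and a: "\<alpha> > 0"
  shows "real (n + 1) * \<rho> * Dint \<rho> \<alpha> (n + 1) + \<alpha> * Dint \<rho> \<alpha> n = 1"
proof -
  let ?f = "\<lambda>y. \<alpha> * (exp (- \<alpha> * y) / (1 + \<rho> * y) ^ (n + 1)) + real (n + 1) * \<rho> * (exp (- \<alpha> * y) / (1 + \<rho> * y) ^ (n + 1 + 1))"
  let ?F = "\<lambda>y. - (exp (- \<alpha> * y) / (1 + \<rho> * y) ^ (n + 1))"
  have "(LBINT x=ereal 0..\<infinity>. ?f x) = 0 - (-1)"
  proof (rule interval_integral_FTC_nonneg)
    fix x assume x: "ereal 0 < ereal x"
    then have x0: "x > 0" by simp
    have ne: "1 + \<rho> * x \<noteq> 0" using x0 r by (smt (verit) mult_pos_pos)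
    have p: "1 + \<rho> * x > 0" using x0 r by (simp add: add_pos_pos)
    have d1: "((\<lambda>y. exp (- \<alpha> * y)) has_real_derivative (- \<alpha> * exp (- \<alpha> * x))) (at x)"
      by (auto intro!: derivative_eq_intros)
    have d2: "((\<lambda>y. (1 + \<rho> * y) ^ (n + 1)) has_real_derivative (real (n + 1) * (1 + \<rho> * x) ^ n * \<rho>)) (at x)"
      by (auto intro!: derivative_eq_intros) (cases n; simp add: algebra_simps)
    have nz: "(1 + \<rho> * x) ^ (n + 1) \<noteq> 0" using p by simp
    have pw1: "(1 + \<rho> * x) ^ (n + 1) = (1 + \<rho> * x) * (1 + \<rho> * x) ^ n" by simp
    have pw2: "(1 + \<rho> * x) ^ (n + 1 + 1) = (1 + \<rho> * x) * ((1 + \<rho> * x) * (1 + \<rho> * x) ^ n)" by simp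
    note d3 = DERIV_minus[OF DERIV_divide[OF d1 d2 nz]]
    show "(?F has_real_derivative ?f x) (at x)"
    proof (rule DERIV_cong[OF d3])
      show "- ((- \<alpha> * exp (- \<alpha> * x) * (1 + \<rho> * x) ^ (n + 1) - exp (- \<alpha> * x) * (real (n + 1) * (1 + \<rho> * x) ^ n * \<rho>)) /
          ((1 + \<rho> * x) ^ (n + 1) * (1 + \<rho> * x) ^ (n + 1))) = ?f x"
        unfolding pw1 pw2 by (rule aux_alg) (use p in auto)
    qed
    show "isCont ?f x" using ne x0 r by (intro continuous_intros) (auto simp: add_pos_pos)
  next
    show "AE x in lborel. ereal 0 < ereal x \<longrightarrow> ereal x < \<infinity> \<longrightarrow> 0 \<le> ?f x"
      using r a by (intro AE_I2) (auto intro!: add_nonneg_nonneg mult_nonneg_nonneg divide_nonneg_pos)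
  next
    have c: "continuous (at_right 0) ?F" using r by (intro continuous_intros) auto
    show "((?F \<circ> real_of_ereal) \<longlongrightarrow> -1) (at_right (ereal 0))"
      unfolding ereal_tendsto_simps using c[unfolded continuous_within] by simp
  next
    have e: "((\<lambda>y. exp (- \<alpha> * y)) \<longlongrightarrow> 0) at_top"
    proof -
      have "filterlim (\<lambda>y. \<alpha> * y) at_top at_top"
        by (intro filterlim_tendsto_pos_mult_at_top[OF tendsto_const] filterlim_ident) (use a in auto)
      then have "filterlim (\<lambda>y. - \<alpha> * y) at_bot at_top"
        by (simp add: filterlim_uminus_at_bot)
      then show ?thesis by (rule exp_at_bot[THEN filterlim_compose])
    qed
    have p: "((\<lambda>y. inverse ((1 + \<rho> * y) ^ (n + 1))) \<longlongrightarrow> 0) at_top"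
    proof -
      have h0: "filterlim (\<lambda>y. \<rho> * y) at_top at_top"
        by (intro filterlim_tendsto_pos_mult_at_top[OF tendsto_const] filterlim_ident) (use r in auto)
      have h1: "filterlim (\<lambda>y. 1 + \<rho> * y) at_top at_top"
        by (rule filterlim_tendsto_add_at_top[OF tendsto_const h0])
      have "filterlim (\<lambda>y. (1 + \<rho> * y) ^ (n + 1)) at_top at_top"
        using filterlim_pow_at_top[OF _ h1, of "n+1"] by simp
      then show ?thesis by (rule tendsto_inverse_0_at_top)
    qed
    show "((?F \<circ> real_of_ereal) \<longlongrightarrow> 0) (at_left \<infinity>)"
      unfolding ereal_tendsto_simps using tendsto_minus[OF tendsto_mult[OF e p]]
      by (simp add: divide_inverse)
  qed simp
  also have "(LBINT x=ereal 0..\<infinity>. ?f x) = (\<integral>x. indicator {0<..} x * ?f x \<partial>lborel)"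
    by (simp add: interval_integral_to_infinity_eq set_lebesgue_integral_def)
  also have "\<dots> = (\<integral>x. \<alpha> * (indicator {0<..} x * (exp (- \<alpha> * x) / (1 + \<rho> * x) ^ (n + 1))) +
         real (n + 1) * \<rho> * (indicator {0<..} x * (exp (- \<alpha> * x) / (1 + \<rho> * x) ^ (n + 1 + 1))) \<partial>lborel)"
    by (intro Bochner_Integration.integral_cong) (auto simp: algebra_simps)
  also have "\<dots> = \<alpha> * Dint \<rho> \<alpha> n + real (n + 1) * \<rho> * Dint \<rho> \<alpha> (n + 1)"
    unfolding Dint_def
    by (simp only: Bochner_Integration.integral_add[OF integrable_mult_right[OF D_integrable[OF r a, of n]]
          integrable_mult_right[OF D_integrable[OF r a, of "n+1"]]] integral_mult_right_zero)
  finally show ?thesis by simp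
qed


lemma A_rec:
  fixes \<rho> \<alpha> :: real
  assumes r: "\<rho> > 0" and a: "\<alpha> > 0"
  shows "Aint \<rho> \<alpha> (n + 1) + Aint \<rho> \<alpha> n / \<rho> = fact n / \<alpha> ^ (n + 1)"
proof -
  have "Aint \<rho> \<alpha> (n + 1) + Aint \<rho> \<alpha> n / \<rho> = Aint \<rho> \<alpha> (n + 1) + inverse \<rho> * Aint \<rho> \<alpha> n"
    by (simp add: divide_inverse mult.commute)
  also have "\<dots> =
    (\<integral>y. indicator {0<..} y * (\<rho> / (1 + \<rho> * y) * (y ^ (n + 1) * exp (- \<alpha> * y))) +
        inverse \<rho> * (indicator {0<..} y * (\<rho> / (1 + \<rho> * y) * (y ^ n * exp (- \<alpha> * y)))) \<partial>lborel)"
    unfolding Aint_def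
    by (simp only: Bochner_Integration.integral_add[OF A_integrable[OF r a, of "n+1"]
          integrable_mult_right[OF A_integrable[OF r a, of n]]] integral_mult_right_zero)
  also have "\<dots> = (\<integral>y. indicator {0<..} y * (y ^ n * exp (- \<alpha> * y)) \<partial>lborel)"
  proof (rule Bochner_Integration.integral_cong[OF refl])
    fix y :: real
    show "indicator {0<..} y * (\<rho> / (1 + \<rho> * y) * (y ^ (n + 1) * exp (- \<alpha> * y))) +
        inverse \<rho> * (indicator {0<..} y * (\<rho> / (1 + \<rho> * y) * (y ^ n * exp (- \<alpha> * y)))) =
        indicator {0<..} y * (y ^ n * exp (- \<alpha> * y))"
    proof (cases "y > 0")
      case True
      then have p: "1 + \<rho> * y > 0" using r by (simp add: add_pos_pos)
      have i: "inverse \<rho> * (\<rho> / (1 + \<rho> * y) * (y ^ n * exp (- \<alpha> * y))) = (y ^ n * exp (- \<alpha> * y)) / (1 + \<rho> * y)"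
        using r by simp
      have j: "\<rho> / (1 + \<rho> * y) * (y ^ (n + 1) * exp (- \<alpha> * y)) = (\<rho> * y) * (y ^ n * exp (- \<alpha> * y)) / (1 + \<rho> * y)"
        by (simp add: algebra_simps)
      have k: "(\<rho> * y) * (y ^ n * exp (- \<alpha> * y)) / (1 + \<rho> * y) + (y ^ n * exp (- \<alpha> * y)) / (1 + \<rho> * y)
          = (1 + \<rho> * y) * (y ^ n * exp (- \<alpha> * y)) / (1 + \<rho> * y)"
        by (simp add: add_divide_distrib[symmetric] algebra_simps)
      have ind: "indicator {0<..} y = (1::real)" using True by simp
      show ?thesis using p by (simp only: ind mult_1_left i j k) simp
    qed simp
  qed
  also have "\<dots> = fact n / \<alpha> ^ (n + 1)" by (rule erl_int(2)[OF a])
  finally show ?thesis .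
qed

lemma A_eq:
  fixes \<rho> \<alpha> :: real
  assumes r: "\<rho> > 0" and a: "\<alpha> > 0"
  shows "Aint \<rho> \<alpha> n = fact n * \<rho> / \<alpha> ^ n * Dint \<rho> \<alpha> n"
proof (induction n)
  case 0
  show ?case unfolding Aint_def Dint_def
    by (simp flip: integral_mult_right_zero) (intro Bochner_Integration.integral_cong; simp add: field_simps)
next
  case (Suc n)
  have "Aint \<rho> \<alpha> (n + 1) = fact n / \<alpha> ^ (n + 1) - Aint \<rho> \<alpha> n / \<rho>"
    using A_rec[OF r a, of n] by simp
  also have "\<dots> = fact n / \<alpha> ^ (n + 1) - fact n / \<alpha> ^ n * Dint \<rho> \<alpha> n"
    using Suc r by simp
  also have "\<dots> = fact n / \<alpha> ^ (n + 1) * (1 - \<alpha> * Dint \<rho> \<alpha> n)"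
    using a by (simp add: field_simps)
  also have "1 - \<alpha> * Dint \<rho> \<alpha> n = real (n + 1) * \<rho> * Dint \<rho> \<alpha> (n + 1)"
    using D_rec[OF r a, of n] by simp
  finally show ?case using a by (simp add: field_simps)
qed

lemma upper_Gamma_eq:
  fixes \<rho> \<alpha> :: real
  assumes r: "\<rho> > 0" and a: "\<alpha> > 0"
  shows "upper_Gamma (- real n) (\<alpha> / \<rho>) = \<alpha> * (\<rho> / \<alpha>) ^ (n + 1) * exp (- (\<alpha> / \<rho>)) * Dint \<rho> \<alpha> n"
proof -
  define z where "z = \<alpha> / \<rho>"
  have z: "z > 0" using r a by (simp add: z_def)
  have "upper_Gamma (- real n) z = (\<integral>t. indicator {z<..} t * (t powr (- real n - 1) * exp (- t)) \<partial>lborel)"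
    by (simp add: upper_Gamma_def set_lebesgue_integral_def)
  also have "\<dots> = \<alpha> * (\<integral>y. indicator {z<..} (z + \<alpha> * y) * ((z + \<alpha> * y) powr (- real n - 1) * exp (- (z + \<alpha> * y))) \<partial>lborel)"
    using lborel_integral_real_affine[of \<alpha> "\<lambda>t. indicator {z<..} t * (t powr (- real n - 1) * exp (- t))" z] a
    by simp
  also have "(\<integral>y. indicator {z<..} (z + \<alpha> * y) * ((z + \<alpha> * y) powr (- real n - 1) * exp (- (z + \<alpha> * y))) \<partial>lborel)
      = (\<integral>y. (\<rho> / \<alpha>) ^ (n + 1) * exp (- z) * (indicator {0<..} y * (exp (- \<alpha> * y) / (1 + \<rho> * y) ^ (n + 1))) \<partial>lborel)"
  proof (rule Bochner_Integration.integral_cong[OF refl])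
    fix y :: real
    show "indicator {z<..} (z + \<alpha> * y) * ((z + \<alpha> * y) powr (- real n - 1) * exp (- (z + \<alpha> * y))) =
      (\<rho> / \<alpha>) ^ (n + 1) * exp (- z) * (indicator {0<..} y * (exp (- \<alpha> * y) / (1 + \<rho> * y) ^ (n + 1)))"
    proof (cases "y > 0")
      case True
      have p: "1 + \<rho> * y > 0" using True r by (simp add: add_pos_pos)
      have eq: "z + \<alpha> * y = (\<alpha> / \<rho>) * (1 + \<rho> * y)" using r by (simp add: z_def field_simps)
      have pos: "z + \<alpha> * y > 0" using z True a by (simp add: add_pos_pos)
      have "(z + \<alpha> * y) powr (- real n - 1) = inverse ((z + \<alpha> * y) ^ (n + 1))"
      proof -
        have "- real n - 1 = - real (n + 1)" by simp
        then show ?thesis by (simp only: powr_minus powr_realpow[OF pos])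
      qed
      also have "\<dots> = (\<rho> / \<alpha>) ^ (n + 1) / (1 + \<rho> * y) ^ (n + 1)"
        unfolding eq by (simp add: power_mult_distrib inverse_mult_distrib power_inverse[symmetric] inverse_divide divide_inverse)
      finally have pw: "(z + \<alpha> * y) powr (- real n - 1) = (\<rho> / \<alpha>) ^ (n + 1) / (1 + \<rho> * y) ^ (n + 1)" .
      have ex: "exp (- (z + \<alpha> * y)) = exp (- z) * exp (- \<alpha> * y)" by (simp add: exp_add[symmetric])
      have ind1: "indicator {z<..} (z + \<alpha> * y) = (1::real)" using True a by simp
      have ind2: "indicator {0<..} y = (1::real)" using True by simp
      show ?thesis unfolding ind1 ind2 pw ex by (simp add: divide_inverse ac_simps)
    next
      case False
      then have "\<not> z < z + \<alpha> * y" using a by (simp add: mult_le_0_iff not_less)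
      then show ?thesis using False by simp
    qed
  qed
  also have "\<dots> = (\<rho> / \<alpha>) ^ (n + 1) * exp (- z) * Dint \<rho> \<alpha> n"
    unfolding Dint_def by (rule integral_mult_right_zero)
  finally show ?thesis unfolding z_def by simp
qed

lemma A_upper:
  fixes \<rho> \<alpha> :: real
  assumes r: "\<rho> > 0" and a: "\<alpha> > 0"
  shows "Aint \<rho> \<alpha> n = Gamma (real n + 1) / \<rho> ^ n * exp (\<alpha> / \<rho>) * upper_Gamma (- real n) (\<alpha> / \<rho>)"
proof -
  have G: "Gamma (real n + 1) = fact n"
    using Gamma_fact[of n] by (simp add: add.commute)
  show ?thesis
    unfolding A_eq[OF r a] upper_Gamma_eq[OF r a] G
    using r a by (simp add: field_simps exp_minus power_add)
qed


definition allT :: "nat \<Rightarrow> nat \<Rightarrow> (nat \<Rightarrow> nat) set" where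
  "allT N m = {k. (\<forall>i>m. k i = 0) \<and> (\<Sum>i\<le>m. k i) = N}"

lemma allT_finite: "finite (allT N m)"
proof -
  have "allT N m \<subseteq> (\<lambda>f i. if i \<le> m then f i else 0) ` (PiE {..m} (\<lambda>_. {..N}))"
  proof
    fix k assume k: "k \<in> allT N m"
    have le: "k i \<le> N" if "i \<le> m" for i
    proof -
      have "k i \<le> (\<Sum>i\<le>m. k i)" using that by (intro member_le_sum) auto
      then show ?thesis using k by (simp add: allT_def)
    qed
    show "k \<in> (\<lambda>f i. if i \<le> m then f i else 0) ` (PiE {..m} (\<lambda>_. {..N}))"
    proof (rule image_eqI[where x="restrict k {..m}"])
      show "k = (\<lambda>i. if i \<le> m then restrict k {..m} i else 0)"
        using k by (auto simp: allT_def fun_eq_iff not_le)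
      show "restrict k {..m} \<in> PiE {..m} (\<lambda>_. {..N})" using le by auto
    qed
  qed
  then show ?thesis by (rule finite_subset) (intro finite_imageI finite_PiE; simp)
qed

lemma allT_0: "allT N 0 = {(\<lambda>i. if i = 0 then N else 0)}"
  by (auto simp: allT_def fun_eq_iff)

lemma multinomial_thm:
  fixes x :: "nat \<Rightarrow> real"
  shows "(\<Sum>i\<le>m. x i) ^ N = (\<Sum>k\<in>allT N m. multinom N m k * (\<Prod>i\<le>m. x i ^ k i))"
proof (induction m arbitrary: N)
  case 0
  show ?case by (simp add: allT_0 multinom_def)
next
  case (Suc m)
  define S where "S = (\<Sum>i\<le>m. x i)"
  define g where "g = (\<lambda>p::nat \<times> (nat \<Rightarrow> nat). real (N choose fst p) * multinom (N - fst p) m (snd p)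
      * ((\<Prod>i\<le>m. x i ^ snd p i) * x (Suc m) ^ fst p))"
  have "(\<Sum>i\<le>Suc m. x i) ^ N = (x (Suc m) + S) ^ N" by (simp add: S_def add.commute)
  also have "\<dots> = (\<Sum>j\<le>N. real (N choose j) * x (Suc m) ^ j * S ^ (N - j))"
    by (rule binomial_ring)
  also have "\<dots> = (\<Sum>j\<le>N. \<Sum>k\<in>allT (N - j) m. g (j, k))"
    unfolding S_def Suc.IH g_def
    by (simp add: sum_distrib_left sum_distrib_right mult_ac)
  also have "\<dots> = sum g (SIGMA j:{..N}. allT (N - j) m)"
    using sum.Sigma[of "{..N}" "\<lambda>j. allT (N-j) m" "\<lambda>j k. g (j,k)"] by (simp add: allT_finite)
  also have "\<dots> = (\<Sum>k\<in>allT N (Suc m). multinom N (Suc m) k * (\<Prod>i\<le>Suc m. x i ^ k i))"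
  proof (rule sum.reindex_bij_witness[where j = "\<lambda>p. (snd p)(Suc m := fst p)" and i = "\<lambda>k. (k (Suc m), k(Suc m := 0))"])
    fix p assume p: "p \<in> (SIGMA j:{..N}. allT (N - j) m)"
    then obtain j k where pjk: "p = (j, k)" and j: "j \<le> N" and k: "k \<in> allT (N - j) m" by auto
    have ks: "k (Suc m) = 0" using k by (simp add: allT_def)
    have ksum: "(\<Sum>i\<le>m. k i) = N - j" using k by (simp add: allT_def)
    have eqs: "(\<Sum>i\<le>m. (k(Suc m := j)) i) = (\<Sum>i\<le>m. k i)"
      by (intro sum.cong) auto
    show "(((snd p)(Suc m := fst p)) (Suc m), ((snd p)(Suc m := fst p))(Suc m := 0)) = p"
      using ks by (auto simp: pjk fun_eq_iff)
    show "(snd p)(Suc m := fst p) \<in> allT N (Suc m)"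
      using k j ksum eqs by (auto simp: pjk allT_def)
    have prod: "(\<Prod>i\<le>Suc m. x i ^ (k(Suc m := j)) i) = (\<Prod>i\<le>m. x i ^ k i) * x (Suc m) ^ j"
    proof -
      have "(\<Prod>i\<le>m. x i ^ (k(Suc m := j)) i) = (\<Prod>i\<le>m. x i ^ k i)" by (intro prod.cong) auto
      then show ?thesis by simp
    qed
    have fprod: "(\<Prod>i\<le>Suc m. fact ((k(Suc m := j)) i) :: real) = (\<Prod>i\<le>m. fact (k i)) * fact j"
    proof -
      have "(\<Prod>i\<le>m. fact ((k(Suc m := j)) i) :: real) = (\<Prod>i\<le>m. fact (k i))" by (intro prod.cong) auto
      then show ?thesis by simp
    qed
    have pos: "(\<Prod>i\<le>m. fact (k i) :: real) > 0" by (intro prod_pos) auto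
    have "multinom N (Suc m) (k(Suc m := j)) = real (N choose j) * multinom (N - j) m k"
      unfolding multinom_def fprod binomial_fact[OF j] using pos by (simp add: field_simps)
    then show "multinom N (Suc m) ((snd p)(Suc m := fst p)) * (\<Prod>i\<le>Suc m. x i ^ ((snd p)(Suc m := fst p)) i) = g p"
      unfolding pjk g_def using prod by simp
  next
    fix k assume k: "k \<in> allT N (Suc m)"
    show "(snd (k (Suc m), k(Suc m := 0)))(Suc m := fst (k (Suc m), k(Suc m := 0))) = k" by auto
    have ksum: "(\<Sum>i\<le>Suc m. k i) = N" using k by (simp add: allT_def)
    have le: "k (Suc m) \<le> N" using ksum by (metis le_add2 sum.atMost_Suc)
    have eqs: "(\<Sum>i\<le>m. (k(Suc m := 0)) i) = (\<Sum>i\<le>m. k i)"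
      by (intro sum.cong) auto
    show "(k (Suc m), k(Suc m := 0)) \<in> (SIGMA j:{..N}. allT (N - j) m)"
      using k le ksum eqs by (auto simp: allT_def)
  qed
  finally show ?case .
qed

lemma allT_split:
  "allT N m = insert (\<lambda>i. if i = 0 then N else 0) (comp_tuples N m)"
  "(\<lambda>i. if i = 0 then N else 0) \<notin> comp_tuples N m"
proof -
  show "(\<lambda>i. if i = 0 then N else 0) \<notin> comp_tuples N m" by (simp add: comp_tuples_def)
  show "allT N m = insert (\<lambda>i. if i = 0 then N else 0) (comp_tuples N m)"
  proof (intro set_eqI iffI)
    fix k assume k: "k \<in> allT N m"
    show "k \<in> insert (\<lambda>i. if i = 0 then N else 0) (comp_tuples N m)"
    proof (cases "k 0 = N")
      case True
      have "(\<Sum>i\<le>m. k i) = k 0 + (\<Sum>i\<in>{1..m}. k i)"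
        by (simp add: sum.atMost_shift atMost_atLeast0 sum.atLeast_Suc_atMost)
      then have "(\<Sum>i\<in>{1..m}. k i) = 0" using k True by (simp add: allT_def)
      then have "\<forall>i\<in>{1..m}. k i = 0" by simp
      then have "k = (\<lambda>i. if i = 0 then N else 0)"
        using k True by (auto simp: allT_def fun_eq_iff)
      then show ?thesis by simp
    next
      case False
      then show ?thesis using k by (simp add: allT_def comp_tuples_def)
    qed
  next
    fix k assume "k \<in> insert (\<lambda>i. if i = 0 then N else 0) (comp_tuples N m)"
    then show "k \<in> allT N m" by (auto simp: allT_def comp_tuples_def)
  qed
qed

lemma multinomial_comp:
  fixes x :: "nat \<Rightarrow> real"
  shows "(\<Sum>i\<le>m. x i) ^ N = x 0 ^ N + (\<Sum>k\<in>comp_tuples N m. multinom N m k * (\<Prod>i\<le>m. x i ^ k i))"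
proof -
  have fin: "finite (comp_tuples N m)"
    using allT_finite[of N m] unfolding allT_split(1) by simp
  have e: "multinom N m (\<lambda>i. if i = 0 then N else 0) * (\<Prod>i\<le>m. x i ^ (if i = 0 then N else 0)) = x 0 ^ N"
  proof -
    have "(\<Prod>i\<le>m. x i ^ (if i = 0 then N else 0)) = (\<Prod>i\<in>{0}. x i ^ N)"
      by (rule prod.mono_neutral_cong_right) auto
    moreover have "(\<Prod>i\<le>m. fact (if i = 0 then N else 0) :: real) = (\<Prod>i\<in>{0::nat}. fact N)"
      by (rule prod.mono_neutral_cong_right) auto
    ultimately show ?thesis by (simp add: multinom_def)
  qed
  show ?thesis
    unfolding multinomial_thm allT_split(1) using fin allT_split(2) e by simp
qed


lemma gamma_to_erlang:
  assumes d: "distributed M lborel X (\<lambda>x. ennreal (gamma_pdf m \<Omega> x))" and m: "m > 0" and O: "\<Omega> > 0"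
  shows "distributed M lborel X (erlang_density (m - 1) (real m / \<Omega>))"
proof -
  have mb: "(\<lambda>x. ennreal (gamma_pdf m \<Omega> x)) \<in> borel_measurable lborel"
    unfolding gamma_pdf_def by measurable
  have ae: "AE x in lborel. ennreal (gamma_pdf m \<Omega> x) = ennreal (erlang_density (m - 1) (real m / \<Omega>) x)"
    using AE_lborel_singleton[of 0]
  proof eventually_elim
    case (elim x)
    have G: "Gamma (real m) = fact (m - 1)"
      using Gamma_fact[of "m - 1"] m by (simp add: of_nat_diff)
    have S: "Suc (m - 1) = m" using m by simp
    show ?case
    proof (cases "x > 0")
      case True
      then show ?thesis unfolding gamma_pdf_def erlang_density_def G S by (simp add: field_simps)
    next
      case False
      then show ?thesis using elim by (simp add: gamma_pdf_def erlang_density_def)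
    qed
  qed
  show ?thesis
    using d density_cong[OF mb _ ae] unfolding distributed_def by auto
qed

lemma (in prob_space) gamma_cdf:
  assumes d: "distributed M lborel X (\<lambda>x. ennreal (gamma_pdf m \<Omega> x))" and m: "m > 0" and O: "\<Omega> > 0"
    and a: "0 \<le> a"
  shows "prob {x\<in>space M. X x \<le> a} = 1 - (\<Sum>n<m. ((real m / \<Omega>) * a) ^ n * exp (- (real m / \<Omega>) * a) / fact n)"
proof -
  have l: "0 < real m / \<Omega>" using m O by simp
  have "prob {x\<in>space M. X x \<le> a} = erlang_CDF (m - 1) (real m / \<Omega>) a"
    using erlang_distributed_le[OF gamma_to_erlang[OF d m O] l a] by simp
  also have "{..m - 1} = {..<m}" using m by auto
  then have "erlang_CDF (m - 1) (real m / \<Omega>) a = 1 - (\<Sum>n<m. ((real m / \<Omega>) * a) ^ n * exp (- (real m / \<Omega>) * a) / fact n)"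
    unfolding erlang_CDF_def using a by simp
  finally show ?thesis .
qed

lemma (in prob_space) gamma_nonneg:
  assumes d: "distributed M lborel X (\<lambda>x. ennreal (gamma_pdf m \<Omega> x))" and m: "m > 0" and O: "\<Omega> > 0"
  shows "AE x in M. 0 \<le> X x"
proof -
  have d': "distributed M lborel X (erlang_density (m - 1) (real m / \<Omega>))" by (rule gamma_to_erlang[OF d m O])
  have "AE x in density lborel (erlang_density (m - 1) (real m / \<Omega>)). 0 \<le> x"
    by (subst AE_density) (auto simp: erlang_density_def)
  then have "AE x in distr M lborel X. 0 \<le> x" unfolding distributed_distr_eq_density[OF d'] .
  then show ?thesis by (rule AE_distrD[OF distributed_measurable[OF d']])
qed

lemma (in prob_space) surv_Y:
  fixes Gsr Gsd Grd :: "nat \<Rightarrow> 'a \<Rightarrow> real" and y a2 :: real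
  assumes ind: "indep_vars (\<lambda>_. borel) (\<lambda>b. case b of SR i \<Rightarrow> Gsr i | SD j \<Rightarrow> Gsd j | RD k \<Rightarrow> Grd k)
           (SR ` {1..Nr} \<union> SD ` {1..Nd} \<union> RD ` {1..Nd})"
    and Nr: "Nr > 0" and Nd: "Nd > 0" and a2: "a2 > 0"
  shows "prob {\<omega>\<in>space M. y < min (a2 * Max ((\<lambda>i. Gsr i \<omega>) ` {1..Nr})) (Max ((\<lambda>k. Grd k \<omega>) ` {1..Nd}))}
    = (1 - (\<Prod>i\<in>{1..Nr}. prob {\<omega>\<in>space M. Gsr i \<omega> \<le> y / a2})) * (1 - (\<Prod>k\<in>{1..Nd}. prob {\<omega>\<in>space M. Grd k \<omega> \<le> y}))"
proof -
  define X where "X = (\<lambda>b. case b of SR i \<Rightarrow> Gsr i | SD j \<Rightarrow> Gsd j | RD k \<Rightarrow> Grd k)"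
  define I where "I = SR ` {1..Nr} \<union> SD ` {1..Nd} \<union> RD ` {1..Nd}"
  have rv: "\<And>i. i \<in> I \<Longrightarrow> X i \<in> borel_measurable M"
    and indp: "indep_sets (\<lambda>i. {X i -` A \<inter> space M | A. A \<in> sets borel}) I"
    using ind unfolding indep_vars_def2 X_def I_def by auto
  have key: "prob (\<Inter>j\<in>J. {\<omega>\<in>space M. X j \<omega> \<le> c j}) = (\<Prod>j\<in>J. prob {\<omega>\<in>space M. X j \<omega> \<le> c j})"
    if J: "J \<subseteq> I" "J \<noteq> {}" "finite J" for J c
  proof -
    have e: "{\<omega>\<in>space M. X j \<omega> \<le> c j} = X j -` {..c j} \<inter> space M" for j by auto
    show ?thesis unfolding e
      by (rule indep_setsD[OF indp J]) (auto intro!: exI[where x="{..c j}" for j])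
  qed
  have ev: "{\<omega>\<in>space M. X j \<omega> \<le> c} \<in> events" if "j \<in> I" for j c
    using rv[OF that] by measurable
  have msr: "i \<in> {1..Nr} \<Longrightarrow> Gsr i \<in> borel_measurable M" for i
    using rv[of "SR i"] by (simp add: X_def I_def)
  have mrd: "k \<in> {1..Nd} \<Longrightarrow> Grd k \<in> borel_measurable M" for k
    using rv[of "RD k"] by (simp add: X_def I_def)
  define Ac where "Ac = (\<Inter>j\<in>SR ` {1..Nr}. {\<omega>\<in>space M. X j \<omega> \<le> y / a2})"
  define Bc where "Bc = (\<Inter>j\<in>RD ` {1..Nd}. {\<omega>\<in>space M. X j \<omega> \<le> y})"
  define c where "c = (\<lambda>b. case b of SR i \<Rightarrow> y / a2 | SD j \<Rightarrow> y | RD k \<Rightarrow> y)"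
  have ACB: "Ac \<inter> Bc = (\<Inter>j\<in>SR ` {1..Nr} \<union> RD ` {1..Nd}. {\<omega>\<in>space M. X j \<omega> \<le> c j})"
    unfolding Ac_def Bc_def INT_Un by (intro arg_cong2[where f="(\<inter>)"] INF_cong) (auto simp: c_def)
  have Aev: "Ac \<in> events" unfolding Ac_def
    using Nr by (intro sets.finite_INT) (auto intro!: ev simp: I_def)
  have Bev: "Bc \<in> events" unfolding Bc_def
    using Nd by (intro sets.finite_INT) (auto intro!: ev simp: I_def)
  have pA: "prob Ac = (\<Prod>i\<in>{1..Nr}. prob {\<omega>\<in>space M. Gsr i \<omega> \<le> y / a2})"
  proof -
    have "prob Ac = (\<Prod>j\<in>SR ` {1..Nr}. prob {\<omega>\<in>space M. X j \<omega> \<le> y / a2})"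
      unfolding Ac_def using Nr by (intro key) (auto simp: I_def)
    also have "\<dots> = (\<Prod>i\<in>{1..Nr}. prob {\<omega>\<in>space M. Gsr i \<omega> \<le> y / a2})"
      by (subst prod.reindex) (auto simp: inj_on_def X_def)
    finally show ?thesis .
  qed
  have pB: "prob Bc = (\<Prod>k\<in>{1..Nd}. prob {\<omega>\<in>space M. Grd k \<omega> \<le> y})"
  proof -
    have "prob Bc = (\<Prod>j\<in>RD ` {1..Nd}. prob {\<omega>\<in>space M. X j \<omega> \<le> y})"
      unfolding Bc_def using Nd by (intro key) (auto simp: I_def)
    also have "\<dots> = (\<Prod>k\<in>{1..Nd}. prob {\<omega>\<in>space M. Grd k \<omega> \<le> y})"
      by (subst prod.reindex) (auto simp: inj_on_def X_def)
    finally show ?thesis .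
  qed
  have pAB: "prob (Ac \<inter> Bc) = prob Ac * prob Bc"
  proof -
    have "prob (Ac \<inter> Bc) = (\<Prod>j\<in>SR ` {1..Nr} \<union> RD ` {1..Nd}. prob {\<omega>\<in>space M. X j \<omega> \<le> c j})"
      unfolding ACB using Nr by (intro key) (auto simp: I_def)
    also have "\<dots> = (\<Prod>j\<in>SR ` {1..Nr}. prob {\<omega>\<in>space M. X j \<omega> \<le> c j}) * (\<Prod>j\<in>RD ` {1..Nd}. prob {\<omega>\<in>space M. X j \<omega> \<le> c j})"
      by (rule prod.union_disjoint) auto
    also have "(\<Prod>j\<in>SR ` {1..Nr}. prob {\<omega>\<in>space M. X j \<omega> \<le> c j}) = (\<Prod>i\<in>{1..Nr}. prob {\<omega>\<in>space M. Gsr i \<omega> \<le> y / a2})"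
      by (subst prod.reindex) (auto simp: inj_on_def X_def c_def)
    also have "(\<Prod>j\<in>RD ` {1..Nd}. prob {\<omega>\<in>space M. X j \<omega> \<le> c j}) = (\<Prod>k\<in>{1..Nd}. prob {\<omega>\<in>space M. Grd k \<omega> \<le> y})"
      by (subst prod.reindex) (auto simp: inj_on_def X_def c_def)
    finally show ?thesis using pA pB by simp
  qed
  have evt: "{\<omega>\<in>space M. y < min (a2 * Max ((\<lambda>i. Gsr i \<omega>) ` {1..Nr})) (Max ((\<lambda>k. Grd k \<omega>) ` {1..Nd}))}
      = space M - (Ac \<union> Bc)"
  proof (intro set_eqI iffI)
    fix \<omega> assume "\<omega> \<in> {\<omega>\<in>space M. y < min (a2 * Max ((\<lambda>i. Gsr i \<omega>) ` {1..Nr})) (Max ((\<lambda>k. Grd k \<omega>) ` {1..Nd}))}"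
    then have sp: "\<omega> \<in> space M" and h1: "y / a2 < Max ((\<lambda>i. Gsr i \<omega>) ` {1..Nr})" and h2: "y < Max ((\<lambda>k. Grd k \<omega>) ` {1..Nd})"
      using a2 by (auto simp: divide_less_eq mult.commute)
    from h1 obtain i where "i \<in> {1..Nr}" "y / a2 < Gsr i \<omega>" using Nr by (auto simp: Max_gr_iff)
    then have "\<omega> \<notin> Ac" unfolding Ac_def X_def by (auto simp: not_le)
    moreover from h2 obtain k where "k \<in> {1..Nd}" "y < Grd k \<omega>" using Nd by (auto simp: Max_gr_iff)
    then have "\<omega> \<notin> Bc" unfolding Bc_def X_def by (auto simp: not_le)
    ultimately show "\<omega> \<in> space M - (Ac \<union> Bc)" using sp by simp
  next
    fix \<omega> assume "\<omega> \<in> space M - (Ac \<union> Bc)"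
    then have sp: "\<omega> \<in> space M" and nA: "\<omega> \<notin> Ac" and nB: "\<omega> \<notin> Bc" by auto
    from nA sp obtain i where "i \<in> {1..Nr}" "y / a2 < Gsr i \<omega>" by (auto simp: Ac_def X_def not_le)
    then have h1: "y / a2 < Max ((\<lambda>i. Gsr i \<omega>) ` {1..Nr})" using Nr by (auto simp: Max_gr_iff)
    from nB sp obtain k where "k \<in> {1..Nd}" "y < Grd k \<omega>" by (auto simp: Bc_def X_def not_le)
    then have h2: "y < Max ((\<lambda>k. Grd k \<omega>) ` {1..Nd})" using Nd by (auto simp: Max_gr_iff)
    show "\<omega> \<in> {\<omega>\<in>space M. y < min (a2 * Max ((\<lambda>i. Gsr i \<omega>) ` {1..Nr})) (Max ((\<lambda>k. Grd k \<omega>) ` {1..Nd}))}"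
      using sp h1 h2 a2 by (auto simp: divide_less_eq mult.commute)
  qed
  have "prob (space M - (Ac \<union> Bc)) = 1 - prob (Ac \<union> Bc)"
    using Aev Bev by (simp add: prob_compl)
  also have "prob (Ac \<union> Bc) = prob Ac + prob Bc - prob (Ac \<inter> Bc)"
    using Aev Bev by (intro measure_Un3) (auto simp: fmeasurable_eq_sets)
  finally show ?thesis unfolding evt pAB pA[symmetric] pB[symmetric] by (simp add: algebra_simps)
qed


definition Pk :: "real \<Rightarrow> real \<Rightarrow> nat \<Rightarrow> nat \<Rightarrow> (nat \<Rightarrow> nat) \<Rightarrow> real" where
  "Pk l y N m k = multinom N m k * (-1) ^ (N - k 0) * (\<Prod>\<mu><m. (1 / fact \<mu>) ^ k (\<mu> + 1))
     * l ^ (\<Sum>\<mu><m. \<mu> * k (\<mu> + 1)) * (y ^ (\<Sum>\<mu><m. \<mu> * k (\<mu> + 1)) * exp (- (real (N - k 0) * l) * y))"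

lemma one_minus_pow:
  fixes l y :: real
  assumes m: "m > 0"
  shows "1 - (1 - (\<Sum>n<m. (l * y) ^ n * exp (- l * y) / fact n)) ^ N = - (\<Sum>k\<in>comp_tuples N m. Pk l y N m k)"
proof -
  obtain m' where m': "m = Suc m'" using m by (cases m) auto
  define A where "A = (\<lambda>\<mu>. (l * y) ^ \<mu> * exp (- l * y) / fact \<mu>)"
  define x where "x = (\<lambda>i. if i = 0 then 1 else - A (i - 1))"
  have lt: "{..m'} = {..<m}" using m' by auto
  have sx: "(\<Sum>i\<le>m. x i) = 1 - (\<Sum>n<m. (l * y) ^ n * exp (- l * y) / fact n)"
    unfolding m' sum.atMost_Suc_shift by (simp add: x_def A_def sum_negf lt[unfolded m'])
  have prodx: "multinom N m k * (\<Prod>i\<le>m. x i ^ k i) = Pk l y N m k" if k: "k \<in> comp_tuples N m" for k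
  proof -
    have ksum: "(\<Sum>i\<le>m. k i) = N" using k by (simp add: comp_tuples_def)
    have ks: "(\<Sum>\<mu><m. k (\<mu> + 1)) = N - k 0"
    proof -
      have "(\<Sum>i\<le>m. k i) = k 0 + (\<Sum>\<mu><m. k (\<mu> + 1))"
        unfolding m' sum.atMost_Suc_shift using lt m' by simp
      then show ?thesis using ksum by simp
    qed
    have fac: "x (\<mu> + 1) ^ c = (-1) ^ c * (1 / fact \<mu>) ^ c * l ^ (\<mu> * c) * (y ^ (\<mu> * c) * exp (- l * y) ^ c)" for \<mu> c
      by (simp add: x_def A_def power_minus' power_mult_distrib power_mult divide_inverse power_inverse mult_ac)
    have "(\<Prod>i\<le>m. x i ^ k i) = (\<Prod>\<mu><m. x (\<mu> + 1) ^ k (\<mu> + 1))"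
      unfolding m' prod.atMost_Suc_shift using lt m' by (simp add: x_def)
    also have "\<dots> = (\<Prod>\<mu><m. (-1) ^ k (\<mu> + 1) * (1 / fact \<mu>) ^ k (\<mu> + 1) * l ^ (\<mu> * k (\<mu> + 1)) * (y ^ (\<mu> * k (\<mu> + 1)) * exp (- l * y) ^ k (\<mu> + 1)))"
      by (simp only: fac)
    also have "\<dots> = (-1) ^ (\<Sum>\<mu><m. k (\<mu> + 1)) * (\<Prod>\<mu><m. (1 / fact \<mu>) ^ k (\<mu> + 1)) * l ^ (\<Sum>\<mu><m. \<mu> * k (\<mu> + 1))
        * (y ^ (\<Sum>\<mu><m. \<mu> * k (\<mu> + 1)) * exp (- l * y) ^ (\<Sum>\<mu><m. k (\<mu> + 1)))"
      by (simp only: prod.distrib power_sum)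
    also have "exp (- l * y) ^ (\<Sum>\<mu><m. k (\<mu> + 1)) = exp (- (real (N - k 0) * l) * y)"
      unfolding ks exp_of_nat_mult[symmetric] by (simp add: algebra_simps)
    finally show ?thesis unfolding Pk_def ks by (simp add: mult_ac)
  qed
  have "1 - (1 - (\<Sum>n<m. (l * y) ^ n * exp (- l * y) / fact n)) ^ N
      = - (\<Sum>k\<in>comp_tuples N m. multinom N m k * (\<Prod>i\<le>m. x i ^ k i))"
    unfolding sx[symmetric] multinomial_comp by (simp add: x_def)
  also have "\<dots> = - (\<Sum>k\<in>comp_tuples N m. Pk l y N m k)"
    using prodx by simp
  finally show ?thesis .
qed


lemma (in prob_space) tail_formula:
  fixes Y :: "'a \<Rightarrow> real" and \<rho> :: real
  assumes Ym[measurable]: "Y \<in> borel_measurable M" and Ynn: "AE \<omega> in M. 0 \<le> Y \<omega>" and r: "\<rho> > 0"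
  shows "integral\<^sup>L M (\<lambda>\<omega>. ln (1 + \<rho> * Y \<omega>)) =
    enn2real (\<integral>\<^sup>+t. ennreal (indicator {0<..} t * (\<rho> / (1 + \<rho> * t) * prob {\<omega>\<in>space M. t < Y \<omega>})) \<partial>lborel)"
proof -
  define Z where "Z = (\<lambda>\<omega>. max 0 (Y \<omega>))"
  have Zm[measurable]: "Z \<in> borel_measurable M" unfolding Z_def by measurable
  have Z0: "0 \<le> Z \<omega>" for \<omega> by (simp add: Z_def)
  interpret p: pair_sigma_finite lborel M
    by (intro pair_sigma_finite.intro lborel.sigma_finite_measure_axioms sigma_finite_measure_axioms)
  define g where "g = (\<lambda>t \<omega>. ennreal (if 0 < t \<and> t < Z \<omega> then \<rho> / (1 + \<rho> * t) else 0))"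
  have gm: "case_prod g \<in> borel_measurable (lborel \<Otimes>\<^sub>M M)"
    unfolding g_def by measurable
  have "integral\<^sup>L M (\<lambda>\<omega>. ln (1 + \<rho> * Y \<omega>)) = integral\<^sup>L M (\<lambda>\<omega>. ln (1 + \<rho> * Z \<omega>))"
  proof (rule integral_cong_AE)
    show "AE \<omega> in M. ln (1 + \<rho> * Y \<omega>) = ln (1 + \<rho> * Z \<omega>)"
      using Ynn by eventually_elim (simp add: Z_def)
  qed measurable
  also have "\<dots> = enn2real (\<integral>\<^sup>+\<omega>. ennreal (ln (1 + \<rho> * Z \<omega>)) \<partial>M)"
    by (rule integral_eq_nn_integral) (use r Z0 in \<open>auto intro!: AE_I2\<close>)
  also have "(\<integral>\<^sup>+\<omega>. ennreal (ln (1 + \<rho> * Z \<omega>)) \<partial>M) = (\<integral>\<^sup>+\<omega>. (\<integral>\<^sup>+t. g t \<omega> \<partial>lborel) \<partial>M)"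
  proof (rule nn_integral_cong)
    fix \<omega>
    have d: "DERIV (\<lambda>t. ln (1 + \<rho> * t)) t :> \<rho> / (1 + \<rho> * t)" if "t \<in> {0..Z \<omega>}" for t
    proof -
      have "1 + \<rho> * t > 0" using that r by (simp add: add_pos_nonneg)
      then show ?thesis by (auto intro!: derivative_eq_intros)
    qed
    have "ennreal (ln (1 + \<rho> * Z \<omega>)) = (\<integral>\<^sup>+t. ennreal (\<rho> / (1 + \<rho> * t)) * indicator {0..Z \<omega>} t \<partial>lborel)"
      by (subst nn_integral_FTC_Icc[where F="\<lambda>t. ln (1 + \<rho> * t)", OF _ d]) (use r Z0 in \<open>auto simp: add_pos_nonneg\<close>)
    also have "\<dots> = (\<integral>\<^sup>+t. g t \<omega> \<partial>lborel)"
      using AE_lborel_singleton[of 0] AE_lborel_singleton[of "Z \<omega>"]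
      by (intro nn_integral_cong_AE, eventually_elim) (auto simp: g_def indicator_def)
    finally show "ennreal (ln (1 + \<rho> * Z \<omega>)) = (\<integral>\<^sup>+t. g t \<omega> \<partial>lborel)" .
  qed
  also have "(\<integral>\<^sup>+\<omega>. (\<integral>\<^sup>+t. g t \<omega> \<partial>lborel) \<partial>M) = (\<integral>\<^sup>+t. (\<integral>\<^sup>+\<omega>. g t \<omega> \<partial>M) \<partial>lborel)"
    by (rule p.Fubini'[OF gm])
  also have "\<dots> = (\<integral>\<^sup>+t. ennreal (indicator {0<..} t * (\<rho> / (1 + \<rho> * t) * prob {\<omega>\<in>space M. t < Y \<omega>})) \<partial>lborel)"
  proof (rule nn_integral_cong)
    fix t :: real
    show "(\<integral>\<^sup>+\<omega>. g t \<omega> \<partial>M) = ennreal (indicator {0<..} t * (\<rho> / (1 + \<rho> * t) * prob {\<omega>\<in>space M. t < Y \<omega>}))"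
    proof (cases "t > 0")
      case True
      have ev: "{\<omega>\<in>space M. t < Y \<omega>} \<in> sets M" by measurable
      have "(\<integral>\<^sup>+\<omega>. g t \<omega> \<partial>M) = (\<integral>\<^sup>+\<omega>. ennreal (\<rho> / (1 + \<rho> * t)) * indicator {\<omega>\<in>space M. t < Y \<omega>} \<omega> \<partial>M)"
        using True by (intro nn_integral_cong) (auto simp: g_def Z_def indicator_def)
      also have "\<dots> = ennreal (\<rho> / (1 + \<rho> * t)) * emeasure M {\<omega>\<in>space M. t < Y \<omega>}"
        by (rule nn_integral_cmult_indicator[OF ev])
      also have "\<dots> = ennreal (indicator {0<..} t * (\<rho> / (1 + \<rho> * t) * prob {\<omega>\<in>space M. t < Y \<omega>}))"
      proof -
        have "0 \<le> \<rho> / (1 + \<rho> * t)" using True r by (simp add: add_pos_pos less_imp_le)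
        then show ?thesis using True by (simp add: emeasure_eq_measure ennreal_mult[symmetric] measure_nonneg)
      qed
      finally show ?thesis .
    next
      case False
      then show ?thesis by (simp add: g_def)
    qed
  qed
  finally show ?thesis .
qed


theorem mainTheorem2:
  fixes M :: "'a measure"
    and Nr Nd msr msd mrd :: nat
    and \<Omega>sr \<Omega>sd \<Omega>rd \<rho> a1 a2 :: real
    and Gsr Gsd Grd :: "nat \<Rightarrow> 'a \<Rightarrow> real"
  assumes "prob_space M"
    and "Nr > 0" "Nd > 0" "msr > 0" "msd > 0" "mrd > 0"
    and "\<Omega>sr > 0" "\<Omega>sd > 0" "\<Omega>rd > 0" "\<rho> > 0"
    and "0 < a1" "a1 < 1" "0 < a2" "a2 < 1" "a1 + a2 = 1" "a1 > a2"
    and "prob_space.indep_vars M (\<lambda>_. borel)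
           (\<lambda>b. case b of SR i \<Rightarrow> Gsr i | SD j \<Rightarrow> Gsd j | RD k \<Rightarrow> Grd k)
           (SR ` {1..Nr} \<union> SD ` {1..Nd} \<union> RD ` {1..Nd})"
    and "\<And>i. i \<in> {1..Nr} \<Longrightarrow> distributed M lborel (Gsr i) (\<lambda>x. ennreal (gamma_pdf msr \<Omega>sr x))"
    and "\<And>j. j \<in> {1..Nd} \<Longrightarrow> distributed M lborel (Gsd j) (\<lambda>x. ennreal (gamma_pdf msd \<Omega>sd x))"
    and "\<And>k. k \<in> {1..Nd} \<Longrightarrow> distributed M lborel (Grd k) (\<lambda>x. ennreal (gamma_pdf mrd \<Omega>rd x))"
  shows
    "(let gsr = (\<lambda>\<omega>. Max ((\<lambda>i. Gsr i \<omega>) ` {1..Nr}));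
          grd = (\<lambda>\<omega>. Max ((\<lambda>k. Grd k \<omega>) ` {1..Nd}));
          Y = (\<lambda>\<omega>. min (a2 * gsr \<omega>) (grd \<omega>))
      in (1/2) * prob_space.expectation M (\<lambda>\<omega>. log 2 (1 + \<rho> * Y \<omega>)))
     = 1 / (2 * ln 2) *
       (\<Sum>k\<in>comp_tuples Nr msr. \<Sum>q\<in>comp_tuples Nd mrd.
          (let \<tau> = (\<Sum>\<mu><msr. \<mu> * k (\<mu> + 1));
               \<upsilon> = (\<Sum>\<epsilon><mrd. \<epsilon> * q (\<epsilon> + 1));
               \<alpha> = real (Nr - k 0) * real msr / (a2 * \<Omega>sr) + real (Nd - q 0) * real mrd / \<Omega>rd
           in multinom Nr msr k * multinom Nd mrd q * (-1) ^ (Nr + Nd - k 0 - q 0)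
              * (\<Prod>\<mu><msr. (1 / fact \<mu>) ^ k (\<mu> + 1)) * (real msr / (a2 * \<Omega>sr)) ^ \<tau>
              * (\<Prod>\<epsilon><mrd. (1 / fact \<epsilon>) ^ q (\<epsilon> + 1)) * (real mrd / \<Omega>rd) ^ \<upsilon>
              * Gamma (real (\<tau> + \<upsilon>) + 1) / \<rho> ^ (\<tau> + \<upsilon>)
              * exp (\<alpha> / \<rho>) * upper_Gamma (- real (\<tau> + \<upsilon>)) (\<alpha> / \<rho>)))"
proof -
  interpret prob_space M by (rule assms(1))
  have Nr: "Nr > 0" and Nd: "Nd > 0" and msr: "msr > 0" and mrd: "mrd > 0"
    and Osr: "\<Omega>sr > 0" and Ord: "\<Omega>rd > 0" and r: "\<rho> > 0" and a2: "a2 > 0"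
    using assms by auto
  note ind = assms(17)
  note dsr = assms(18) and drd = assms(20)
  define gsr where "gsr = (\<lambda>\<omega>. Max ((\<lambda>i. Gsr i \<omega>) ` {1..Nr}))"
  define grd where "grd = (\<lambda>\<omega>. Max ((\<lambda>k. Grd k \<omega>) ` {1..Nd}))"
  define Y where "Y = (\<lambda>\<omega>. min (a2 * gsr \<omega>) (grd \<omega>))"
  define lr where "lr = real msr / (a2 * \<Omega>sr)"
  define ld where "ld = real mrd / \<Omega>rd"
  define tau where "tau = (\<lambda>k::nat\<Rightarrow>nat. \<Sum>\<mu><msr. \<mu> * k (\<mu> + 1))"
  define ups where "ups = (\<lambda>q::nat\<Rightarrow>nat. \<Sum>\<epsilon><mrd. \<epsilon> * q (\<epsilon> + 1))"
  define al where "al = (\<lambda>(k::nat\<Rightarrow>nat) (q::nat\<Rightarrow>nat). real (Nr - k 0) * lr + real (Nd - q 0) * ld)"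
  define C where "C = (\<lambda>(k::nat\<Rightarrow>nat) (q::nat\<Rightarrow>nat). multinom Nr msr k * multinom Nd mrd q * (-1) ^ (Nr + Nd - k 0 - q 0)
              * (\<Prod>\<mu><msr. (1 / fact \<mu>) ^ k (\<mu> + 1)) * lr ^ tau k
              * (\<Prod>\<epsilon><mrd. (1 / fact \<epsilon>) ^ q (\<epsilon> + 1)) * ld ^ ups q)"
  define KS where "KS = comp_tuples Nr msr"
  define QS where "QS = comp_tuples Nd mrd"
  have finK: "finite KS" unfolding KS_def comp_tuples_def
    by (rule finite_subset[OF _ allT_finite[of Nr msr]]) (auto simp: allT_def)
  have finQ: "finite QS" unfolding QS_def comp_tuples_def
    by (rule finite_subset[OF _ allT_finite[of Nd mrd]]) (auto simp: allT_def)
  have k0: "k 0 < Nr" if "k \<in> KS" for k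
  proof -
    have "k 0 \<le> (\<Sum>i\<le>msr. k i)" by (intro member_le_sum) auto
    then show ?thesis using that by (auto simp: KS_def comp_tuples_def)
  qed
  have q0: "q 0 < Nd" if "q \<in> QS" for q
  proof -
    have "q 0 \<le> (\<Sum>i\<le>mrd. q i)" by (intro member_le_sum) auto
    then show ?thesis using that by (auto simp: QS_def comp_tuples_def)
  qed
  have lr0: "lr > 0" using msr a2 Osr by (simp add: lr_def)
  have ld0: "ld > 0" using mrd Ord by (simp add: ld_def)
  have alpos: "al k q > 0" if "k \<in> KS" "q \<in> QS" for k q
    using k0[OF that(1)] q0[OF that(2)] lr0 ld0 by (simp add: al_def add_pos_pos)
  have msr_i: "Gsr i \<in> borel_measurable M" if "i \<in> {1..Nr}" for i
    using distributed_measurable[OF dsr[OF that]] by simp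
  have mrd_k: "Grd k \<in> borel_measurable M" if "k \<in> {1..Nd}" for k
    using distributed_measurable[OF drd[OF that]] by simp
  have gsrm[measurable]: "gsr \<in> borel_measurable M" unfolding gsr_def
    by (rule borel_measurable_Max) (auto intro: msr_i)
  have grdm[measurable]: "grd \<in> borel_measurable M" unfolding grd_def
    by (rule borel_measurable_Max) (auto intro: mrd_k)
  have Ym: "Y \<in> borel_measurable M" unfolding Y_def by measurable
  have Ynn: "AE \<omega> in M. 0 \<le> Y \<omega>"
  proof -
    have A1: "AE \<omega> in M. \<forall>i\<in>{1..Nr}. 0 \<le> Gsr i \<omega>"
      by (rule AE_finite_allI) (auto intro: gamma_nonneg[OF dsr msr Osr])
    have A2: "AE \<omega> in M. \<forall>k\<in>{1..Nd}. 0 \<le> Grd k \<omega>"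
      by (rule AE_finite_allI) (auto intro: gamma_nonneg[OF drd mrd Ord])
    show ?thesis using A1 A2
    proof eventually_elim
      case (elim \<omega>)
      have "0 \<le> gsr \<omega>" unfolding gsr_def using elim Nr by (auto simp: Max_ge_iff intro!: bexI[of _ 1])
      moreover have "0 \<le> grd \<omega>" unfolding grd_def using elim Nd by (auto simp: Max_ge_iff intro!: bexI[of _ 1])
      ultimately show ?case using a2 by (simp add: Y_def)
    qed
  qed
  have surv: "prob {\<omega>\<in>space M. t < Y \<omega>} = (\<Sum>k\<in>KS. \<Sum>q\<in>QS. C k q * (t ^ (tau k + ups q) * exp (- al k q * t)))"
    if t: "t > 0" for t
  proof -
    have cr: "(\<Prod>i\<in>{1..Nr}. prob {\<omega>\<in>space M. Gsr i \<omega> \<le> t / a2}) = (1 - (\<Sum>n<msr. (lr * t) ^ n * exp (- lr * t) / fact n)) ^ Nr"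
    proof -
      have "(\<Prod>i\<in>{1..Nr}. prob {\<omega>\<in>space M. Gsr i \<omega> \<le> t / a2}) = (\<Prod>i\<in>{1..Nr}. 1 - (\<Sum>n<msr. (lr * t) ^ n * exp (- lr * t) / fact n))"
      proof (rule prod.cong[OF refl])
        fix i assume i: "i \<in> {1..Nr}"
        have e: "real msr / \<Omega>sr * (t / a2) = lr * t" by (simp add: lr_def)
        have e2: "- (real msr / \<Omega>sr) * (t / a2) = - lr * t" by (simp add: lr_def)
        show "prob {\<omega>\<in>space M. Gsr i \<omega> \<le> t / a2} = 1 - (\<Sum>n<msr. (lr * t) ^ n * exp (- lr * t) / fact n)"
          using gamma_cdf[OF dsr[OF i] msr Osr, of "t / a2"] t a2 unfolding e e2 by simp
      qed
      then show ?thesis by simp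
    qed
    have cd: "(\<Prod>k\<in>{1..Nd}. prob {\<omega>\<in>space M. Grd k \<omega> \<le> t}) = (1 - (\<Sum>n<mrd. (ld * t) ^ n * exp (- ld * t) / fact n)) ^ Nd"
    proof -
      have "(\<Prod>k\<in>{1..Nd}. prob {\<omega>\<in>space M. Grd k \<omega> \<le> t}) = (\<Prod>k\<in>{1..Nd}. 1 - (\<Sum>n<mrd. (ld * t) ^ n * exp (- ld * t) / fact n))"
      proof (rule prod.cong[OF refl])
        fix k assume k: "k \<in> {1..Nd}"
        show "prob {\<omega>\<in>space M. Grd k \<omega> \<le> t} = 1 - (\<Sum>n<mrd. (ld * t) ^ n * exp (- ld * t) / fact n)"
          using gamma_cdf[OF drd[OF k] mrd Ord, of t] t unfolding ld_def by simp
      qed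
      then show ?thesis by simp
    qed
    have "prob {\<omega>\<in>space M. t < Y \<omega>} = (1 - (\<Prod>i\<in>{1..Nr}. prob {\<omega>\<in>space M. Gsr i \<omega> \<le> t / a2})) * (1 - (\<Prod>k\<in>{1..Nd}. prob {\<omega>\<in>space M. Grd k \<omega> \<le> t}))"
      unfolding Y_def gsr_def grd_def by (rule surv_Y[OF ind Nr Nd a2])
    also have "\<dots> = (\<Sum>k\<in>KS. Pk lr t Nr msr k) * (\<Sum>q\<in>QS. Pk ld t Nd mrd q)"
      unfolding cr cd one_minus_pow[OF msr] one_minus_pow[OF mrd] KS_def QS_def by simp
    also have "\<dots> = (\<Sum>k\<in>KS. \<Sum>q\<in>QS. Pk lr t Nr msr k * Pk ld t Nd mrd q)"
      by (rule sum_product)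
    also have "\<dots> = (\<Sum>k\<in>KS. \<Sum>q\<in>QS. C k q * (t ^ (tau k + ups q) * exp (- al k q * t)))"
    proof (intro sum.cong refl)
      fix k q assume k: "k \<in> KS" and q: "q \<in> QS"
      have s: "(-1::real) ^ (Nr - k 0) * (-1) ^ (Nd - q 0) = (-1) ^ (Nr + Nd - k 0 - q 0)"
      proof -
        have "Nr + Nd - k 0 - q 0 = (Nr - k 0) + (Nd - q 0)" using k0[OF k] q0[OF q] by simp
        then show ?thesis by (simp add: power_add)
      qed
      have e: "exp (- (real (Nr - k 0) * lr) * t) * exp (- (real (Nd - q 0) * ld) * t) = exp (- al k q * t)"
        unfolding al_def by (simp add: exp_add[symmetric] algebra_simps)
      show "Pk lr t Nr msr k * Pk ld t Nd mrd q = C k q * (t ^ (tau k + ups q) * exp (- al k q * t))"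
        unfolding Pk_def C_def tau_def ups_def power_add s[symmetric] e[symmetric] by (simp add: mult_ac)
    qed
    finally show ?thesis .
  qed
  define h where "h = (\<lambda>t. \<Sum>k\<in>KS. \<Sum>q\<in>QS. C k q * (indicator {0<..} t * (\<rho> / (1 + \<rho> * t) * (t ^ (tau k + ups q) * exp (- al k q * t)))))"
  have hint: "integrable lborel h" unfolding h_def
    by (intro Bochner_Integration.integrable_sum integrable_mult_right A_integrable[OF r alpos]) auto
  have hval: "h t = indicator {0<..} t * (\<rho> / (1 + \<rho> * t) * prob {\<omega>\<in>space M. t < Y \<omega>})" for t
  proof (cases "t > 0")
    case True
    show ?thesis unfolding surv[OF True] h_def using True by (simp add: sum_distrib_left mult_ac)
  next
    case False
    then show ?thesis by (simp add: h_def)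
  qed
  have hnn: "0 \<le> h t" for t
    unfolding hval using r by (auto intro!: mult_nonneg_nonneg divide_nonneg_pos add_pos_nonneg measure_nonneg simp: indicator_def)
  have "integral\<^sup>L M (\<lambda>\<omega>. ln (1 + \<rho> * Y \<omega>)) = enn2real (\<integral>\<^sup>+t. ennreal (h t) \<partial>lborel)"
    unfolding hval by (rule tail_formula[OF Ym Ynn r])
  also have "(\<integral>\<^sup>+t. ennreal (h t) \<partial>lborel) = ennreal (integral\<^sup>L lborel h)"
    by (rule nn_integral_eq_integral[OF hint]) (use hnn in auto)
  finally have pre: "integral\<^sup>L M (\<lambda>\<omega>. ln (1 + \<rho> * Y \<omega>)) = enn2real (ennreal (integral\<^sup>L lborel h))" .
  have hsum: "integral\<^sup>L lborel h = (\<Sum>k\<in>KS. \<Sum>q\<in>QS. C k q * Aint \<rho> (al k q) (tau k + ups q))"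
  proof -
    have I1: "integrable lborel (\<lambda>t. C k q * (indicator {0<..} t * (\<rho> / (1 + \<rho> * t) * (t ^ (tau k + ups q) * exp (- al k q * t)))))"
      if "k \<in> KS" "q \<in> QS" for k q
      by (rule integrable_mult_right[OF A_integrable[OF r alpos[OF that]]])
    have I2: "integrable lborel (\<lambda>t. \<Sum>q\<in>QS. C k q * (indicator {0<..} t * (\<rho> / (1 + \<rho> * t) * (t ^ (tau k + ups q) * exp (- al k q * t)))))"
      if "k \<in> KS" for k
      by (rule Bochner_Integration.integrable_sum) (rule I1[OF that])
    have "integral\<^sup>L lborel h = (\<Sum>k\<in>KS. \<integral>t. (\<Sum>q\<in>QS. C k q * (indicator {0<..} t * (\<rho> / (1 + \<rho> * t) * (t ^ (tau k + ups q) * exp (- al k q * t))))) \<partial>lborel)"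
      unfolding h_def by (rule Bochner_Integration.integral_sum) (rule I2)
    also have "\<dots> = (\<Sum>k\<in>KS. \<Sum>q\<in>QS. \<integral>t. C k q * (indicator {0<..} t * (\<rho> / (1 + \<rho> * t) * (t ^ (tau k + ups q) * exp (- al k q * t)))) \<partial>lborel)"
    proof (rule sum.cong[OF refl])
      fix k assume k: "k \<in> KS"
      show "(\<integral>t. (\<Sum>q\<in>QS. C k q * (indicator {0<..} t * (\<rho> / (1 + \<rho> * t) * (t ^ (tau k + ups q) * exp (- al k q * t))))) \<partial>lborel)
        = (\<Sum>q\<in>QS. \<integral>t. C k q * (indicator {0<..} t * (\<rho> / (1 + \<rho> * t) * (t ^ (tau k + ups q) * exp (- al k q * t)))) \<partial>lborel)"
        by (rule Bochner_Integration.integral_sum) (rule I1[OF k])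
    qed
    also have "\<dots> = (\<Sum>k\<in>KS. \<Sum>q\<in>QS. C k q * Aint \<rho> (al k q) (tau k + ups q))"
      unfolding Aint_def by (simp only: integral_mult_right_zero)
    finally show ?thesis .
  qed
  have hge: "0 \<le> integral\<^sup>L lborel h" by (rule Bochner_Integration.integral_nonneg) (rule hnn)
  have main: "integral\<^sup>L M (\<lambda>\<omega>. ln (1 + \<rho> * Y \<omega>)) = (\<Sum>k\<in>KS. \<Sum>q\<in>QS. C k q * Aint \<rho> (al k q) (tau k + ups q))"
    using pre hge hsum by simp
  have lg: "expectation (\<lambda>\<omega>. log 2 (1 + \<rho> * Y \<omega>)) = expectation (\<lambda>\<omega>. ln (1 + \<rho> * Y \<omega>)) / ln 2"
    by (simp add: log_def integral_divide_zero)
  have terms: "C k q * Aint \<rho> (al k q) (tau k + ups q) =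
     (let \<tau> = (\<Sum>\<mu><msr. \<mu> * k (\<mu> + 1));
          \<upsilon> = (\<Sum>\<epsilon><mrd. \<epsilon> * q (\<epsilon> + 1));
          \<alpha> = real (Nr - k 0) * real msr / (a2 * \<Omega>sr) + real (Nd - q 0) * real mrd / \<Omega>rd
      in multinom Nr msr k * multinom Nd mrd q * (-1) ^ (Nr + Nd - k 0 - q 0)
         * (\<Prod>\<mu><msr. (1 / fact \<mu>) ^ k (\<mu> + 1)) * (real msr / (a2 * \<Omega>sr)) ^ \<tau>
         * (\<Prod>\<epsilon><mrd. (1 / fact \<epsilon>) ^ q (\<epsilon> + 1)) * (real mrd / \<Omega>rd) ^ \<upsilon>
         * Gamma (real (\<tau> + \<upsilon>) + 1) / \<rho> ^ (\<tau> + \<upsilon>)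
         * exp (\<alpha> / \<rho>) * upper_Gamma (- real (\<tau> + \<upsilon>)) (\<alpha> / \<rho>))"
    if k: "k \<in> KS" and q: "q \<in> QS" for k q
  proof -
    have ae: "al k q = real (Nr - k 0) * real msr / (a2 * \<Omega>sr) + real (Nd - q 0) * real mrd / \<Omega>rd"
      by (simp add: al_def lr_def ld_def)
    show ?thesis
      unfolding A_upper[OF r alpos[OF k q]] Let_def ae[symmetric]
      unfolding C_def lr_def[symmetric] ld_def[symmetric] tau_def ups_def
      by (simp add: divide_inverse mult_ac)
  qed
  have fin: "(\<Sum>k\<in>KS. \<Sum>q\<in>QS. C k q * Aint \<rho> (al k q) (tau k + ups q)) =
     (\<Sum>k\<in>KS. \<Sum>q\<in>QS. (let \<tau> = (\<Sum>\<mu><msr. \<mu> * k (\<mu> + 1));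
          \<upsilon> = (\<Sum>\<epsilon><mrd. \<epsilon> * q (\<epsilon> + 1));
          \<alpha> = real (Nr - k 0) * real msr / (a2 * \<Omega>sr) + real (Nd - q 0) * real mrd / \<Omega>rd
      in multinom Nr msr k * multinom Nd mrd q * (-1) ^ (Nr + Nd - k 0 - q 0)
         * (\<Prod>\<mu><msr. (1 / fact \<mu>) ^ k (\<mu> + 1)) * (real msr / (a2 * \<Omega>sr)) ^ \<tau>
         * (\<Prod>\<epsilon><mrd. (1 / fact \<epsilon>) ^ q (\<epsilon> + 1)) * (real mrd / \<Omega>rd) ^ \<upsilon>
         * Gamma (real (\<tau> + \<upsilon>) + 1) / \<rho> ^ (\<tau> + \<upsilon>)
         * exp (\<alpha> / \<rho>) * upper_Gamma (- real (\<tau> + \<upsilon>)) (\<alpha> / \<rho>)))"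
  proof (rule sum.cong[OF refl])
    fix k assume k: "k \<in> KS"
    show "(\<Sum>q\<in>QS. C k q * Aint \<rho> (al k q) (tau k + ups q)) = (\<Sum>q\<in>QS. (let \<tau> = (\<Sum>\<mu><msr. \<mu> * k (\<mu> + 1));
          \<upsilon> = (\<Sum>\<epsilon><mrd. \<epsilon> * q (\<epsilon> + 1));
          \<alpha> = real (Nr - k 0) * real msr / (a2 * \<Omega>sr) + real (Nd - q 0) * real mrd / \<Omega>rd
      in multinom Nr msr k * multinom Nd mrd q * (-1) ^ (Nr + Nd - k 0 - q 0)
         * (\<Prod>\<mu><msr. (1 / fact \<mu>) ^ k (\<mu> + 1)) * (real msr / (a2 * \<Omega>sr)) ^ \<tau>
         * (\<Prod>\<epsilon><mrd. (1 / fact \<epsilon>) ^ q (\<epsilon> + 1)) * (real mrd / \<Omega>rd) ^ \<upsilon>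
         * Gamma (real (\<tau> + \<upsilon>) + 1) / \<rho> ^ (\<tau> + \<upsilon>)
         * exp (\<alpha> / \<rho>) * upper_Gamma (- real (\<tau> + \<upsilon>)) (\<alpha> / \<rho>)))"
      by (rule sum.cong[OF refl]) (rule terms[OF k])
  qed
  have L: "(let gsr = (\<lambda>\<omega>. Max ((\<lambda>i. Gsr i \<omega>) ` {1..Nr}));
          grd = (\<lambda>\<omega>. Max ((\<lambda>k. Grd k \<omega>) ` {1..Nd}));
          Y = (\<lambda>\<omega>. min (a2 * gsr \<omega>) (grd \<omega>))
      in (1/2) * prob_space.expectation M (\<lambda>\<omega>. log 2 (1 + \<rho> * Y \<omega>))) = (1/2) * expectation (\<lambda>\<omega>. log 2 (1 + \<rho> * Y \<omega>))"
    by (simp only: Let_def Y_def gsr_def grd_def)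
  show ?thesis
  proof -
    have ar: "1 / 2 * (X / ln 2) = 1 / (2 * ln 2) * X" for X :: real by simp
    show ?thesis unfolding L lg main fin unfolding KS_def QS_def by (rule ar)
  qed
qed


end
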